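(* Let $k$ be an even positive integer and $m\geq 1$ an integer. Let $G$ be a connected graph whose complement $\overline{G}$ is isomorphic to the disjoint union of $\frac{k}{2}$ copies of the path $P_5$ (on 5 vertices) and $m$ isolated vertices. Then $G$ has exactly $k$ basis forced vertices and $\dim(G)=k+m-1$.
   Context: All graphs are finite and simple. $\overline{G}$ denotes the complement graph. For vertices $u,v$ of a connected graph $G$, $d(u,v)$ is the length of a shortest $u$–$v$ path. A set $R\subseteq V(G)$ is a resolving set if for all distinct $x,y\in V(G)$ there is $r\in R$ with $d(r,x)\neq d(r,y)$. The metric dimension $\dim(G)$ is the minimum cardinality of a resolving set, and a resolving set of cardinality $\dim(G)$ is a metric basis. A vertex is a basis forced vertex if it belongs to every metric basis of $G$. *)

theory Defs
  imports Main
begin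

definition simple_graph :: "'a set \<Rightarrow> ('a \<Rightarrow> 'a \<Rightarrow> bool) \<Rightarrow> bool" where
  "simple_graph V E \<longleftrightarrow> finite V \<and> (\<forall>x y. E x y \<longrightarrow> x \<in> V \<and> y \<in> V)
     \<and> (\<forall>x y. E x y \<longrightarrow> E y x) \<and> (\<forall>x. \<not> E x x)"

definition is_walk :: "('a \<Rightarrow> 'a \<Rightarrow> bool) \<Rightarrow> 'a list \<Rightarrow> 'a \<Rightarrow> 'a \<Rightarrow> bool" where
  "is_walk E xs u v \<longleftrightarrow> xs \<noteq> [] \<and> hd xs = u \<and> last xs = v
     \<and> (\<forall>i. Suc i < length xs \<longrightarrow> E (xs ! i) (xs ! Suc i))"

definition connected_graph :: "'a set \<Rightarrow> ('a \<Rightarrow> 'a \<Rightarrow> bool) \<Rightarrow> bool" where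
  "connected_graph V E \<longleftrightarrow> V \<noteq> {} \<and> (\<forall>u\<in>V. \<forall>v\<in>V. \<exists>xs. is_walk E xs u v)"

definition gdist :: "('a \<Rightarrow> 'a \<Rightarrow> bool) \<Rightarrow> 'a \<Rightarrow> 'a \<Rightarrow> nat" where
  "gdist E u v = (LEAST n. \<exists>xs. is_walk E xs u v \<and> length xs = Suc n)"

definition complement :: "'a set \<Rightarrow> ('a \<Rightarrow> 'a \<Rightarrow> bool) \<Rightarrow> 'a \<Rightarrow> 'a \<Rightarrow> bool" where
  "complement V E x y \<longleftrightarrow> x \<in> V \<and> y \<in> V \<and> x \<noteq> y \<and> \<not> E x y"

definition resolving_set :: "'a set \<Rightarrow> ('a \<Rightarrow> 'a \<Rightarrow> bool) \<Rightarrow> 'a set \<Rightarrow> bool" where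
  "resolving_set V E R \<longleftrightarrow> R \<subseteq> V \<and>
     (\<forall>x\<in>V. \<forall>y\<in>V. x \<noteq> y \<longrightarrow> (\<exists>r\<in>R. gdist E r x \<noteq> gdist E r y))"

definition metric_dim :: "'a set \<Rightarrow> ('a \<Rightarrow> 'a \<Rightarrow> bool) \<Rightarrow> nat" where
  "metric_dim V E = (LEAST n. \<exists>R. resolving_set V E R \<and> card R = n)"

definition metric_basis :: "'a set \<Rightarrow> ('a \<Rightarrow> 'a \<Rightarrow> bool) \<Rightarrow> 'a set \<Rightarrow> bool" where
  "metric_basis V E B \<longleftrightarrow> resolving_set V E B \<and> card B = metric_dim V E"

definition basis_forced :: "'a set \<Rightarrow> ('a \<Rightarrow> 'a \<Rightarrow> bool) \<Rightarrow> 'a \<Rightarrow> bool" where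
  "basis_forced V E v \<longleftrightarrow> v \<in> V \<and> (\<forall>B. metric_basis V E B \<longrightarrow> v \<in> B)"

definition graph_iso :: "'a set \<Rightarrow> ('a \<Rightarrow> 'a \<Rightarrow> bool) \<Rightarrow> 'b set \<Rightarrow> ('b \<Rightarrow> 'b \<Rightarrow> bool) \<Rightarrow> bool" where
  "graph_iso V E W F \<longleftrightarrow> (\<exists>f. bij_betw f V W \<and> (\<forall>x\<in>V. \<forall>y\<in>V. E x y \<longleftrightarrow> F (f x) (f y)))"

text \<open>Disjoint union of p copies of the path P5 (vertices Inl (i,j), i<p, j<5, path 0-1-2-3-4)
  and q isolated vertices (Inr i, i<q).\<close>
definition paths_iso_verts :: "nat \<Rightarrow> nat \<Rightarrow> ((nat \<times> nat) + nat) set" where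
  "paths_iso_verts p q = Inl ` ({..<p} \<times> {..<5}) \<union> Inr ` {..<q}"

fun paths_iso_edge :: "nat \<Rightarrow> (nat \<times> nat) + nat \<Rightarrow> (nat \<times> nat) + nat \<Rightarrow> bool" where
  "paths_iso_edge p (Inl (i, j)) (Inl (i', j')) \<longleftrightarrow>
     i < p \<and> i' = i \<and> j < 5 \<and> j' < 5 \<and> (j' = Suc j \<or> j = Suc j')"
| "paths_iso_edge p _ _ \<longleftrightarrow> False"

end

theory Submission
  imports Defs
begin
definition adj5 :: "nat \<Rightarrow> nat \<Rightarrow> bool" where "adj5 l j \<longleftrightarrow> (j = Suc l \<or> l = Suc j)"

lemma card5: assumes "T \<subseteq> {..<5::nat}"
  shows "card T = (if 0\<in>T then 1 else 0) + (if 1\<in>T then 1 else 0) + (if 2\<in>T then 1 else 0)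
     + (if 3\<in>T then 1 else 0) + (if 4\<in>T then 1 else 0)"
proof -
  have "card T = (\<Sum>j<5. if j \<in> T then 1 else 0)"
    using assms by (simp add: sum.If_cases Int_absorb1)
  also have "\<dots> = (if 0\<in>T then 1 else 0) + (if 1\<in>T then 1 else 0) + (if 2\<in>T then 1 else 0)
     + (if 3\<in>T then 1 else 0) + (if 4\<in>T then 1 else 0)"
    by (simp add: numeral_eq_Suc)
  finally show ?thesis .
qed

lemma comp_lemma:
  assumes sub: "T \<subseteq> {..<5::nat}"
    and sep: "\<forall>j<5. \<forall>j'<5. j\<noteq>j' \<longrightarrow> j\<in>T \<or> j'\<in>T \<or> (\<exists>l<5. l\<in>T \<and> adj5 l j \<noteq> adj5 l j')"
  shows "2 \<le> card T \<and> ((\<forall>j<5. j\<notin>T \<longrightarrow> (\<exists>l<5. l\<in>T \<and> adj5 l j)) \<longrightarrow> card T = 2 \<longrightarrow> 1\<in>T \<and> 3\<in>T)"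
  using sep unfolding card5[OF sub] adj5_def
  apply (cases "0\<in>T"; cases "Suc 0\<in>T"; cases "Suc (Suc 0)\<in>T"; cases "Suc (Suc (Suc 0))\<in>T"; cases "Suc (Suc (Suc (Suc 0)))\<in>T"; simp add: numeral_eq_Suc All_less_Suc Ex_less_Suc)
  done

definition resW :: "nat \<Rightarrow> nat \<Rightarrow> ((nat \<times> nat) + nat) set \<Rightarrow> bool" where
  "resW p m S \<longleftrightarrow> S \<subseteq> paths_iso_verts p m \<and>
    (\<forall>x\<in>paths_iso_verts p m. \<forall>y\<in>paths_iso_verts p m. x \<noteq> y \<longrightarrow>
       x \<in> S \<or> y \<in> S \<or> (\<exists>r\<in>S. paths_iso_edge p r x \<noteq> paths_iso_edge p r y))"

definition St :: "nat \<Rightarrow> nat \<Rightarrow> nat \<Rightarrow> ((nat \<times> nat) + nat) set" where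
  "St p m t = Inl ` ({..<p} \<times> {1,3}) \<union> Inr ` ({..<m} - {t})"

lemma P_Inr2[simp]: "paths_iso_edge p r (Inr a) = False"
  by (cases r) auto

lemma P_Inr1[simp]: "paths_iso_edge p (Inr a) r = False"
  by simp

lemma St_card: "t < m \<Longrightarrow> card (St p m t) = 2*p + m - 1"
proof -
  assume t: "t < m"
  have "card (St p m t) = card (Inl ` ({..<p} \<times> {1::nat,3}) :: ((nat \<times> nat) + nat) set) + card (Inr ` ({..<m} - {t}) :: ((nat \<times> nat) + nat) set)"
    unfolding St_def by (subst card_Un_disjoint) auto
  also have "\<dots> = card ({..<p} \<times> {1::nat,3}) + card ({..<m} - {t})"
    by (simp add: card_image)
  also have "\<dots> = 2*p + (m - 1)" using t by (simp add: card_cartesian_product)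
  finally show ?thesis using t by simp
qed

lemma St_res: assumes t: "t < m" shows "resW p m (St p m t)"
  unfolding resW_def
proof (intro conjI ballI impI)
  show "St p m t \<subseteq> paths_iso_verts p m"
    unfolding St_def paths_iso_verts_def by auto
next
  fix x y assume xW: "x \<in> paths_iso_verts p m" and yW: "y \<in> paths_iso_verts p m" and xy: "x \<noteq> y"
  let ?S = "St p m t"
  let ?P = "paths_iso_edge p"
  show "x \<in> ?S \<or> y \<in> ?S \<or> (\<exists>r\<in>?S. ?P r x \<noteq> ?P r y)"
  proof (rule ccontr)
    assume H: "\<not> (x \<in> ?S \<or> y \<in> ?S \<or> (\<exists>r\<in>?S. ?P r x \<noteq> ?P r y))"
    hence nx: "x \<notin> ?S" and ny: "y \<notin> ?S" and nr: "\<And>r. r \<in> ?S \<Longrightarrow> ?P r x = ?P r y" by auto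
    have in1: "\<And>i. i < p \<Longrightarrow> Inl (i,1) \<in> ?S" and in3: "\<And>i. i < p \<Longrightarrow> Inl (i,3) \<in> ?S"
      unfolding St_def by auto
    have cx: "(\<exists>i j. x = Inl (i,j) \<and> i < p \<and> j < 5 \<and> j \<noteq> 1 \<and> j \<noteq> 3) \<or> x = Inr t"
      using xW nx t unfolding paths_iso_verts_def St_def by auto
    have cy: "(\<exists>i j. y = Inl (i,j) \<and> i < p \<and> j < 5 \<and> j \<noteq> 1 \<and> j \<noteq> 3) \<or> y = Inr t"
      using yW ny t unfolding paths_iso_verts_def St_def by auto
    have key: "\<And>i j u. i < p \<Longrightarrow> j < 5 \<Longrightarrow> j \<noteq> 1 \<Longrightarrow> j \<noteq> 3 \<Longrightarrow> u \<noteq> Inl (i,j) \<Longrightarrow>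
       (\<exists>i' j'. u = Inl (i',j') \<and> i' < p \<and> j' < 5 \<and> j' \<noteq> 1 \<and> j' \<noteq> 3) \<or> u = Inr t \<Longrightarrow>
       ?P (Inl (i,1)) (Inl (i,j)) \<noteq> ?P (Inl (i,1)) u \<or> ?P (Inl (i,3)) (Inl (i,j)) \<noteq> ?P (Inl (i,3)) u"
      by auto
    show False
    proof (cases "x = Inr t")
      case True
      then obtain i j where y: "y = Inl (i,j)" "i < p" "j < 5" "j \<noteq> 1" "j \<noteq> 3" using cy xy by auto
      from key[OF y(2-5), of x] True y nr[OF in1[OF y(2)]] nr[OF in3[OF y(2)]] show False by auto
    next
      case False
      then obtain i j where x: "x = Inl (i,j)" "i < p" "j < 5" "j \<noteq> 1" "j \<noteq> 3" using cx by auto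
      from key[OF x(2-5), of y] cy xy x nr[OF in1[OF x(2)]] nr[OF in3[OF x(2)]] show False by auto
    qed
  qed
qed

lemma lower:
  assumes res: "resW p m S"
  shows "2*p + m - 1 \<le> card S \<and> (1 \<le> m \<longrightarrow> card S = 2*p + m - 1 \<longrightarrow> Inl ` ({..<p} \<times> {1,3}) \<subseteq> S)"
proof -
  let ?W = "paths_iso_verts p m"
  let ?P = "paths_iso_edge p"
  define T where "T i = {j. Inl (i,j) \<in> S}" for i
  define U where "U = {a. Inr a \<in> S}"
  have SW: "S \<subseteq> ?W" and sep: "\<And>x y. x \<in> ?W \<Longrightarrow> y \<in> ?W \<Longrightarrow> x \<noteq> y \<Longrightarrow>
       x \<in> S \<or> y \<in> S \<or> (\<exists>r\<in>S. ?P r x \<noteq> ?P r y)"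
    using res unfolding resW_def by auto
  have Seq: "S = Inl ` (SIGMA i:{..<p}. T i) \<union> Inr ` U"
  proof (intro equalityI subsetI)
    fix x assume "x \<in> S"
    with SW show "x \<in> Inl ` (SIGMA i:{..<p}. T i) \<union> Inr ` U"
      unfolding paths_iso_verts_def T_def U_def by auto
  qed (auto simp: T_def U_def)
  have Tsub: "T i \<subseteq> {..<5}" if "i < p" for i
    using SW unfolding T_def paths_iso_verts_def by auto
  have Usub: "U \<subseteq> {..<m}"
    using SW unfolding U_def paths_iso_verts_def by auto
  have finT: "finite (T i)" if "i < p" for i using Tsub[OF that] finite_subset by blast
  have finU: "finite U" using Usub finite_subset by blast
  have cardS: "card S = (\<Sum>i<p. card (T i)) + card U"
  proof -
    have "card S = card (Inl ` (SIGMA i:{..<p}. T i) :: ((nat \<times> nat) + nat) set) + card (Inr ` U :: ((nat \<times> nat) + nat) set)"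
      unfolding Seq using finT finU by (subst card_Un_disjoint) auto
    also have "\<dots> = card (SIGMA i:{..<p}. T i) + card U" by (simp add: card_image)
    also have "card (SIGMA i:{..<p}. T i) = (\<Sum>i<p. card (T i))"
      using finT by (simp add: card_SigmaI)
    finally show ?thesis .
  qed
  have sepT: "\<forall>j<5. \<forall>j'<5. j\<noteq>j' \<longrightarrow> j\<in>T i \<or> j'\<in>T i \<or> (\<exists>l<5. l\<in>T i \<and> adj5 l j \<noteq> adj5 l j')"
    if i: "i < p" for i
  proof (intro allI impI)
    fix j j' :: nat assume j: "j < 5" "j' < 5" "j \<noteq> j'"
    have "Inl (i,j) \<in> ?W" "Inl (i,j') \<in> ?W" using i j unfolding paths_iso_verts_def by auto
    from sep[OF this] j have "Inl (i,j) \<in> S \<or> Inl (i,j') \<in> S \<or> (\<exists>r\<in>S. ?P r (Inl (i,j)) \<noteq> ?P r (Inl (i,j')))"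
      by auto
    moreover have "\<exists>l<5. l\<in>T i \<and> adj5 l j \<noteq> adj5 l j'" if "r \<in> S" "?P r (Inl (i,j)) \<noteq> ?P r (Inl (i,j'))" for r
    proof (cases r)
      case (Inl a)
      then obtain i' l where r: "r = Inl (i',l)" by (cases a) auto
      with that j show ?thesis unfolding T_def adj5_def by auto
    next
      case (Inr b) with that show ?thesis by simp
    qed
    ultimately show "j\<in>T i \<or> j'\<in>T i \<or> (\<exists>l<5. l\<in>T i \<and> adj5 l j \<noteq> adj5 l j')"
      unfolding T_def by blast
  qed
  have T2: "2 \<le> card (T i)" if "i < p" for i
    using comp_lemma[OF Tsub[OF that] sepT[OF that]] by blast
  have sum2: "2*p \<le> (\<Sum>i<p. card (T i))"
  proof -
    have "(\<Sum>i<p. (2::nat)) \<le> (\<Sum>i<p. card (T i))" by (rule sum_mono) (simp add: T2)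
    thus ?thesis by simp
  qed
  have Ule: "card ({..<m} - U) \<le> Suc 0"
  proof (subst card_le_Suc0_iff_eq, simp, intro ballI)
    fix a b assume a: "a \<in> {..<m} - U" and b: "b \<in> {..<m} - U"
    show "a = b"
    proof (rule ccontr)
      assume "a \<noteq> b"
      moreover have "Inr a \<in> ?W" "Inr b \<in> ?W" using a b unfolding paths_iso_verts_def by auto
      ultimately have "Inr a \<in> S \<or> Inr b \<in> S \<or> (\<exists>r\<in>S. ?P r (Inr a) \<noteq> ?P r (Inr b))"
        using sep by blast
      thus False using a b unfolding U_def by auto
    qed
  qed
  have cU: "card ({..<m} - U) = m - card U" using Usub finU by (simp add: card_Diff_subset)
  have U1: "m - 1 \<le> card U" using Ule cU by simp
  have part1: "2*p + m - 1 \<le> card S" using cardS sum2 U1 by linarith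
  moreover have "Inl ` ({..<p} \<times> {1,3}) \<subseteq> S" if m1: "1 \<le> m" and eq: "card S = 2*p + m - 1"
  proof -
    have sumeq: "(\<Sum>i<p. card (T i)) = 2*p" and Ueq: "card U = m - 1"
      using cardS sum2 U1 eq m1 by linarith+
    have Teq: "card (T i) = 2" if i: "i < p" for i
    proof (rule ccontr)
      assume "card (T i) \<noteq> 2"
      with T2[OF i] have "2 < card (T i)" by simp
      hence "(\<Sum>i<p. (2::nat)) < (\<Sum>i<p. card (T i))"
        using i T2 by (intro sum_strict_mono_ex1) auto
      with sumeq show False by simp
    qed
    obtain t where t: "t < m" "t \<notin> U"
    proof -
      have "\<not> {..<m} \<subseteq> U"
      proof
        assume "{..<m} \<subseteq> U"
        hence "card {..<m} \<le> card U" using finU by (rule card_mono[rotated])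
        with Ueq m1 show False by simp
      qed
      thus ?thesis using that by auto
    qed
    have "1 \<in> T i \<and> 3 \<in> T i" if i: "i < p" for i
    proof -
      have "\<forall>j<5. j\<notin>T i \<longrightarrow> (\<exists>l<5. l\<in>T i \<and> adj5 l j)"
      proof (intro allI impI)
        fix j :: nat assume j: "j < 5" "j \<notin> T i"
        have "Inl (i,j) \<in> ?W" "Inr t \<in> ?W" using i j t unfolding paths_iso_verts_def by auto
        from sep[OF this] have "Inl (i,j) \<in> S \<or> Inr t \<in> S \<or> (\<exists>r\<in>S. ?P r (Inl (i,j)))"
          by auto
        with j t obtain r where r: "r \<in> S" "?P r (Inl (i,j))" unfolding T_def U_def by auto
        then obtain i' l where "r = Inl (i',l)" by (cases r) (auto split: prod.splits)
        with r j show "\<exists>l<5. l\<in>T i \<and> adj5 l j" unfolding T_def adj5_def by auto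
      qed
      thus ?thesis using comp_lemma[OF Tsub[OF i] sepT[OF i]] Teq[OF i] by blast
    qed
    thus ?thesis unfolding T_def by auto
  qed
  ultimately show ?thesis by blast
qed

lemma walk1: "is_walk E xs r x \<Longrightarrow> length xs = Suc 0 \<Longrightarrow> r = x"
  unfolding is_walk_def by (cases xs) auto

lemma walk2: "is_walk E xs r x \<Longrightarrow> length xs = Suc (Suc 0) \<Longrightarrow> E r x"
proof -
  assume w: "is_walk E xs r x" and l: "length xs = Suc (Suc 0)"
  then obtain a b where xs: "xs = [a,b]"
    by (cases xs; cases "tl xs") auto
  with w have "E (xs!0) (xs!Suc 0)" unfolding is_walk_def by auto
  with w xs show ?thesis unfolding is_walk_def by simp
qed

lemma gdist0: "gdist E r r = 0"
  unfolding gdist_def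
  by (rule Least_equality) (auto intro!: exI[of _ "[r]"] simp: is_walk_def)

lemma gdist1: "r \<noteq> x \<Longrightarrow> E r x \<Longrightarrow> gdist E r x = 1"
  unfolding gdist_def
proof (rule Least_equality)
  assume "E r x"
  show "\<exists>xs. is_walk E xs r x \<and> length xs = Suc 1"
    by (rule exI[of _ "[r,x]"]) (auto simp: is_walk_def \<open>E r x\<close>)
next
  fix y assume "r \<noteq> x" "\<exists>xs. is_walk E xs r x \<and> length xs = Suc y"
  then obtain xs where "is_walk E xs r x" "length xs = Suc y" by auto
  thus "1 \<le> y" using walk1[of E xs r x] \<open>r \<noteq> x\<close> by (cases y) auto
qed

lemma gdist2: "r \<noteq> x \<Longrightarrow> \<not> E r x \<Longrightarrow> E r z \<Longrightarrow> E z x \<Longrightarrow> gdist E r x = 2"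
  unfolding gdist_def
proof (rule Least_equality)
  assume "E r z" "E z x"
  show "\<exists>xs. is_walk E xs r x \<and> length xs = Suc 2"
    by (rule exI[of _ "[r,z,x]"]) (auto simp: is_walk_def \<open>E r z\<close> \<open>E z x\<close> less_Suc_eq nth_Cons split: nat.splits)
next
  fix y assume "r \<noteq> x" "\<not> E r x" "\<exists>xs. is_walk E xs r x \<and> length xs = Suc y"
  then obtain xs where "is_walk E xs r x" "length xs = Suc y" by auto
  thus "2 \<le> y" using walk1[of E xs r x] walk2[of E xs r x] \<open>r \<noteq> x\<close> \<open>\<not> E r x\<close>
    by (cases y; cases "y - 1") auto
qed

theorem lemma9:
  fixes V :: "'a set" and E :: "'a \<Rightarrow> 'a \<Rightarrow> bool" and k m :: nat
  assumes "k > 0" and "even k" and "m \<ge> 1"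
    and "simple_graph V E" and "connected_graph V E"
    and "graph_iso V (complement V E) (paths_iso_verts (k div 2) m) (paths_iso_edge (k div 2))"
  shows "card {v \<in> V. basis_forced V E v} = k \<and> metric_dim V E = k + m - 1"
proof -
  define p where "p = k div 2"
  have k2: "k = 2*p" using assms(2) unfolding p_def by simp
  let ?W = "paths_iso_verts p m"
  let ?P = "paths_iso_edge p"
  obtain f where bij: "bij_betw f V ?W" and iso: "\<And>x y. x\<in>V \<Longrightarrow> y\<in>V \<Longrightarrow> complement V E x y \<longleftrightarrow> ?P (f x) (f y)"
    using assms(6) unfolding graph_iso_def p_def by blast
  define g where "g = inv_into V f"
  have fV: "f x \<in> ?W" if "x \<in> V" for x using bij that by (meson bij_betwE)
  have gW: "g w \<in> V" if "w \<in> ?W" for w using bij that unfolding g_def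
    by (metis bij_betw_imp_surj_on inv_into_into)
  have fg: "f (g w) = w" if "w \<in> ?W" for w using bij that unfolding g_def
    by (meson bij_betw_inv_into_right)
  have gf: "g (f x) = x" if "x \<in> V" for x using bij that unfolding g_def
    by (meson bij_betw_inv_into_left)
  have injf: "inj_on f V" using bij bij_betw_def by blast
  have injg: "inj_on g ?W" by (metis fg inj_onI)
  have sg: "simple_graph V E" by fact
  have EV: "\<And>x y. E x y \<Longrightarrow> x \<in> V \<and> y \<in> V" and Esym: "\<And>x y. E x y \<Longrightarrow> E y x" and Eirr: "\<And>x. \<not> E x x"
    using sg unfolding simple_graph_def by auto
  have Eiff: "E x y \<longleftrightarrow> \<not> ?P (f x) (f y)" if "x \<in> V" "y \<in> V" "x \<noteq> y" for x y
    using iso[OF that(1,2)] that unfolding complement_def by auto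
  have I0: "Inr 0 \<in> ?W" using assms(3) unfolding paths_iso_verts_def by auto
  define z where "z = g (Inr 0)"
  have zV: "z \<in> V" and fz: "f z = Inr 0" unfolding z_def using gW[OF I0] fg[OF I0] by auto
  have Ez: "E r z" if "r \<in> V" "r \<noteq> z" for r using Eiff[OF that(1) zV that(2)] fz by simp
  have D: "gdist E r x = (if r = x then 0 else if ?P (f r) (f x) then 2 else 1)" if rx: "r \<in> V" "x \<in> V" for r x
  proof (cases "r = x")
    case True thus ?thesis by (simp add: gdist0)
  next
    case False
    show ?thesis
    proof (cases "?P (f r) (f x)")
      case True
      hence nE: "\<not> E r x" using Eiff[OF rx False] by simp
      have "r \<noteq> z" using Ez[OF rx(2)] nE Esym False by blast
      moreover have "x \<noteq> z" using Ez[OF rx(1)] nE False by blast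
      ultimately have "gdist E r x = 2" using gdist2[OF False nE Ez[OF rx(1)] Esym[OF Ez[OF rx(2)]]] by simp
      thus ?thesis using True False by simp
    next
      case f: False
      thus ?thesis using Eiff[OF rx False] gdist1[OF False] False by simp
    qed
  qed
  have toW: "resW p m (f ` R) \<and> card (f ` R) = card R" if R: "resolving_set V E R" for R
  proof
    have RV: "R \<subseteq> V" using R unfolding resolving_set_def by auto
    show "card (f ` R) = card R" using RV injf by (meson card_image inj_on_subset)
    show "resW p m (f ` R)" unfolding resW_def
    proof (intro conjI ballI impI)
      show "f ` R \<subseteq> ?W" using RV fV by auto
    next
      fix x' y' assume x': "x' \<in> ?W" and y': "y' \<in> ?W" and ne: "x' \<noteq> y'"
      define x y where "x = g x'" and "y = g y'"
      have xV: "x \<in> V" and yV: "y \<in> V" and fx: "f x = x'" and fy: "f y = y'"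
        unfolding x_def y_def using gW fg x' y' by auto
      have "x \<noteq> y" using ne fx fy by auto
      with R xV yV obtain r where r: "r \<in> R" "gdist E r x \<noteq> gdist E r y"
        unfolding resolving_set_def by blast
      have rV: "r \<in> V" using r RV by auto
      show "x' \<in> f ` R \<or> y' \<in> f ` R \<or> (\<exists>r\<in>f ` R. ?P r x' \<noteq> ?P r y')"
      proof (cases "r = x \<or> r = y")
        case True thus ?thesis using r fx fy by auto
      next
        case False
        hence "?P (f r) x' \<noteq> ?P (f r) y'" using r(2) D[OF rV xV] D[OF rV yV] fx fy by (auto split: if_splits)
        thus ?thesis using r by auto
      qed
    qed
  qed
  have toV: "resolving_set V E (g ` S) \<and> card (g ` S) = card S" if S: "resW p m S" for S
  proof
    have SW: "S \<subseteq> ?W" using S unfolding resW_def by auto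
    show "card (g ` S) = card S" using SW injg by (meson card_image inj_on_subset)
    show "resolving_set V E (g ` S)" unfolding resolving_set_def
    proof (intro conjI ballI impI)
      show "g ` S \<subseteq> V" using SW gW by auto
    next
      fix x y assume xV: "x \<in> V" and yV: "y \<in> V" and ne: "x \<noteq> y"
      have "f x \<noteq> f y" using ne injf xV yV by (meson inj_onD)
      with S fV[OF xV] fV[OF yV] have c: "f x \<in> S \<or> f y \<in> S \<or> (\<exists>r\<in>S. ?P r (f x) \<noteq> ?P r (f y))"
        unfolding resW_def by blast
      show "\<exists>r\<in>g ` S. gdist E r x \<noteq> gdist E r y"
      proof (cases "f x \<in> S")
        case True
        hence "x \<in> g ` S" using gf[OF xV] by (metis image_eqI)
        thus ?thesis using D[OF xV xV] D[OF xV yV] ne by (intro bexI[of _ x]) auto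
      next
        case nx: False
        show ?thesis
        proof (cases "f y \<in> S")
          case True
          hence "y \<in> g ` S" using gf[OF yV] by (metis image_eqI)
          thus ?thesis using D[OF yV xV] D[OF yV yV] ne by (intro bexI[of _ y]) auto
        next
          case ny: False
          then obtain r' where r': "r' \<in> S" "?P r' (f x) \<noteq> ?P r' (f y)" using c nx by auto
          have rV: "g r' \<in> V" and fr: "f (g r') = r'" using gW fg r'(1) SW by auto
          have "g r' \<noteq> x" "g r' \<noteq> y" using fr r'(1) nx ny by auto
          hence "gdist E (g r') x \<noteq> gdist E (g r') y" using D[OF rV xV] D[OF rV yV] fr r'(2) by auto
          thus ?thesis using r'(1) by blast
        qed
      qed
    qed
  qed
  have dim: "metric_dim V E = 2*p + m - 1"
    unfolding metric_dim_def
  proof (rule Least_equality)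
    have "0 < m" using assms(3) by simp
    from toV[OF St_res[OF this]] St_card[OF this]
    show "\<exists>R. resolving_set V E R \<and> card R = 2*p + m - 1" by metis
  next
    fix n assume "\<exists>R. resolving_set V E R \<and> card R = n"
    then obtain R where "resolving_set V E R" "card R = n" by auto
    with toW lower show "2*p + m - 1 \<le> n" by metis
  qed
  define F where "F = (Inl ` ({..<p} \<times> {1,3}) :: ((nat \<times> nat) + nat) set)"
  have FW: "F \<subseteq> ?W" unfolding F_def paths_iso_verts_def by auto
  have forced: "{v \<in> V. basis_forced V E v} = g ` F"
  proof (intro equalityI subsetI)
    fix v assume "v \<in> {v \<in> V. basis_forced V E v}"
    hence vV: "v \<in> V" and bf: "\<And>B. metric_basis V E B \<Longrightarrow> v \<in> B"
      unfolding basis_forced_def by auto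
    have "f v \<in> F"
    proof (rule ccontr)
      assume nF: "f v \<notin> F"
      obtain t where t: "t < m" "f v \<notin> St p m t"
      proof (cases "f v")
        case (Inl a)
        thus ?thesis using that[of 0] nF assms(3) unfolding St_def F_def by auto
      next
        case (Inr b)
        thus ?thesis using that[of b] fV[OF vV] unfolding St_def paths_iso_verts_def by auto
      qed
      have "metric_basis V E (g ` St p m t)"
        using toV[OF St_res[OF t(1)]] St_card[OF t(1)] dim unfolding metric_basis_def by simp
      hence "v \<in> g ` St p m t" by (rule bf)
      then obtain s where "s \<in> St p m t" "v = g s" by auto
      moreover have "St p m t \<subseteq> ?W" using St_res[OF t(1)] unfolding resW_def by auto
      ultimately show False using fg t(2) by auto
    qed
    thus "v \<in> g ` F" using gf[OF vV] by (metis image_eqI)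
  next
    fix v assume "v \<in> g ` F"
    then obtain w where w: "w \<in> F" "v = g w" by auto
    have vV: "v \<in> V" using w FW gW by auto
    have "v \<in> B" if B: "metric_basis V E B" for B
    proof -
      have rB: "resolving_set V E B" and cB: "card B = 2*p + m - 1" using B dim unfolding metric_basis_def by auto
      have BV: "B \<subseteq> V" using rB unfolding resolving_set_def by auto
      from toW[OF rB] cB lower assms(3) have "F \<subseteq> f ` B" unfolding F_def by metis
      then obtain b where "b \<in> B" "w = f b" using w by auto
      thus ?thesis using w gf BV by auto
    qed
    thus "v \<in> {v \<in> V. basis_forced V E v}" using vV unfolding basis_forced_def by auto
  qed
  have "card (g ` F) = card F" using injg FW by (meson card_image inj_on_subset)
  also have "card F = card ({..<p} \<times> {1::nat,3})" unfolding F_def by (simp add: card_image)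
  also have "\<dots> = k" using k2 by (simp add: card_cartesian_product)
  finally show ?thesis using forced dim k2 by simp
qed
end
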